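(* Let $L'$ be a superintuitionistic logic with $\mathsf{Box}\subsetneq L'$ which is not of finite depth. Then there is some $n$ such that every finite rooted frame of $L'$ has stack-depth at most $n$.
   Context: $\mathsf{Box}=\mathsf{wPL}\oplus\mathsf{bw}_2\oplus(\neg p\vee\neg\neg p)$, where $\mathsf{wPL}=\mathsf{IPC}\oplus(q\to p)\vee(((p\to q)\to p)\to p)$ and $\mathsf{bw}_2=\bigvee_{i=0}^2(p_i\to\bigvee_{j\ne i}p_j)$. Finite rooted frames of $\mathsf{wPL}$ are Boolean sums: finite rooted posets where (1) each immediate successor of $x$ has depth $d(x)-1$, (2) each point of depth $k+1$ is below all points of depth $k$ (depth of $x$: length of the longest chain starting at $x$; maximal points have depth $1$). For a Boolean sum, a $k$-stack is a run of $k$ consecutive depths each containing more than one point; the stack-depth is the largest $k$ for which a $k$-stack exists. $L$ is of finite depth if $L\supseteq\mathsf{IPC}\oplus\mathsf{bd}_m$ for some $m$, where $\mathsf{bd}_0=p_0$, $\mathsf{bd}_{m+1}=p_{m+1}\vee(p_{m+1}\to\mathsf{bd}_m)$. *)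

theory Defs
  imports Main
begin

datatype fm = Var nat | Bot | Conj fm fm | Disj fm fm | Imp fm fm

definition Neg :: "fm \<Rightarrow> fm" where "Neg A = Imp A Bot"

primrec subst :: "(nat \<Rightarrow> fm) \<Rightarrow> fm \<Rightarrow> fm" where
  "subst s (Var n) = s n"
| "subst s Bot = Bot"
| "subst s (Conj A B) = Conj (subst s A) (subst s B)"
| "subst s (Disj A B) = Disj (subst s A) (subst s B)"
| "subst s (Imp A B) = Imp (subst s A) (subst s B)"

inductive_set IPC :: "fm set" where
  ax1: "Imp A (Imp B A) \<in> IPC"
| ax2: "Imp (Imp A (Imp B C)) (Imp (Imp A B) (Imp A C)) \<in> IPC"
| ax3: "Imp (Conj A B) A \<in> IPC"
| ax4: "Imp (Conj A B) B \<in> IPC"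
| ax5: "Imp A (Imp B (Conj A B)) \<in> IPC"
| ax6: "Imp A (Disj A B) \<in> IPC"
| ax7: "Imp B (Disj A B) \<in> IPC"
| ax8: "Imp (Imp A C) (Imp (Imp B C) (Imp (Disj A B) C)) \<in> IPC"
| ax9: "Imp Bot A \<in> IPC"
| mp: "A \<in> IPC \<Longrightarrow> Imp A B \<in> IPC \<Longrightarrow> B \<in> IPC"

definition si_logic :: "fm set \<Rightarrow> bool" where
  "si_logic L \<longleftrightarrow> IPC \<subseteq> L
     \<and> (\<forall>A B. A \<in> L \<longrightarrow> Imp A B \<in> L \<longrightarrow> B \<in> L)
     \<and> (\<forall>s A. A \<in> L \<longrightarrow> subst s A \<in> L)"

inductive_set ext :: "fm set \<Rightarrow> fm set \<Rightarrow> fm set" for L \<Gamma> where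
  ipc: "A \<in> IPC \<Longrightarrow> A \<in> ext L \<Gamma>"
| base: "A \<in> L \<Longrightarrow> A \<in> ext L \<Gamma>"
| new: "A \<in> \<Gamma> \<Longrightarrow> A \<in> ext L \<Gamma>"
| mp: "A \<in> ext L \<Gamma> \<Longrightarrow> Imp A B \<in> ext L \<Gamma> \<Longrightarrow> B \<in> ext L \<Gamma>"
| sub: "A \<in> ext L \<Gamma> \<Longrightarrow> subst s A \<in> ext L \<Gamma>"

definition wPL_ax :: fm where
  "wPL_ax = (let p = Var 0; q = Var 1 in
     Disj (Imp q p) (Imp (Imp (Imp p q) p) p))"

definition wPL :: "fm set" where "wPL = ext IPC {wPL_ax}"

definition bw2 :: fm where
  "bw2 = Disj (Imp (Var 0) (Disj (Var 1) (Var 2)))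
          (Disj (Imp (Var 1) (Disj (Var 0) (Var 2)))
                (Imp (Var 2) (Disj (Var 0) (Var 1))))"

definition wem :: fm where "wem = Disj (Neg (Var 0)) (Neg (Neg (Var 0)))"

definition Box :: "fm set" where "Box = ext (ext wPL {bw2}) {wem}"

fun bd :: "nat \<Rightarrow> fm" where
  "bd 0 = Var 0"
| "bd (Suc m) = Disj (Var (Suc m)) (Imp (Var (Suc m)) (bd m))"

definition finite_depth :: "fm set \<Rightarrow> bool" where
  "finite_depth L \<longleftrightarrow> (\<exists>m. ext IPC {bd m} \<subseteq> L)"

text \<open>Frames are given by a carrier W and a relation R (used only on W).\<close>

definition upset :: "nat set \<Rightarrow> (nat \<Rightarrow> nat \<Rightarrow> bool) \<Rightarrow> nat set \<Rightarrow> bool" where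
  "upset W R U \<longleftrightarrow> U \<subseteq> W \<and> (\<forall>x\<in>U. \<forall>y\<in>W. R x y \<longrightarrow> y \<in> U)"

fun sat :: "nat set \<Rightarrow> (nat \<Rightarrow> nat \<Rightarrow> bool) \<Rightarrow> (nat \<Rightarrow> nat set) \<Rightarrow> nat \<Rightarrow> fm \<Rightarrow> bool" where
  "sat W R V x (Var n) = (x \<in> V n)"
| "sat W R V x Bot = False"
| "sat W R V x (Conj A B) = (sat W R V x A \<and> sat W R V x B)"
| "sat W R V x (Disj A B) = (sat W R V x A \<or> sat W R V x B)"
| "sat W R V x (Imp A B) =
     (\<forall>y\<in>W. R x y \<longrightarrow> sat W R V y A \<longrightarrow> sat W R V y B)"

definition valid_in :: "nat set \<Rightarrow> (nat \<Rightarrow> nat \<Rightarrow> bool) \<Rightarrow> fm \<Rightarrow> bool" where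
  "valid_in W R A \<longleftrightarrow>
     (\<forall>V. (\<forall>n. upset W R (V n)) \<longrightarrow> (\<forall>x\<in>W. sat W R V x A))"

definition finite_rooted_frame :: "nat set \<Rightarrow> (nat \<Rightarrow> nat \<Rightarrow> bool) \<Rightarrow> bool" where
  "finite_rooted_frame W R \<longleftrightarrow> finite W \<and> W \<noteq> {}
     \<and> (\<forall>x\<in>W. R x x)
     \<and> (\<forall>x\<in>W. \<forall>y\<in>W. \<forall>z\<in>W. R x y \<longrightarrow> R y z \<longrightarrow> R x z)
     \<and> (\<forall>x\<in>W. \<forall>y\<in>W. R x y \<longrightarrow> R y x \<longrightarrow> x = y)
     \<and> (\<exists>r\<in>W. \<forall>x\<in>W. R r x)"

definition frame_of :: "fm set \<Rightarrow> nat set \<Rightarrow> (nat \<Rightarrow> nat \<Rightarrow> bool) \<Rightarrow> bool" where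
  "frame_of L W R \<longleftrightarrow> finite_rooted_frame W R \<and> (\<forall>A\<in>L. valid_in W R A)"

definition strict_chain :: "nat set \<Rightarrow> (nat \<Rightarrow> nat \<Rightarrow> bool) \<Rightarrow> nat list \<Rightarrow> bool" where
  "strict_chain W R xs \<longleftrightarrow> set xs \<subseteq> W
     \<and> (\<forall>i. Suc i < length xs \<longrightarrow> R (xs ! i) (xs ! Suc i) \<and> xs ! i \<noteq> xs ! Suc i)"

text \<open>Depth of x: length of the longest chain starting at x (maximal points: depth 1).\<close>
definition depth :: "nat set \<Rightarrow> (nat \<Rightarrow> nat \<Rightarrow> bool) \<Rightarrow> nat \<Rightarrow> nat" where
  "depth W R x = Max {length xs | xs. xs \<noteq> [] \<and> hd xs = x \<and> strict_chain W R xs}"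

definition k_stack :: "nat set \<Rightarrow> (nat \<Rightarrow> nat \<Rightarrow> bool) \<Rightarrow> nat \<Rightarrow> bool" where
  "k_stack W R k \<longleftrightarrow> (\<exists>d. \<forall>i<k. card {x\<in>W. depth W R x = d + i} > 1)"

definition stack_depth_le :: "nat set \<Rightarrow> (nat \<Rightarrow> nat \<Rightarrow> bool) \<Rightarrow> nat \<Rightarrow> bool" where
  "stack_depth_le W R n \<longleftrightarrow> (\<forall>k. k_stack W R k \<longrightarrow> k \<le> n)"

end

theory Submission
  imports Defs
begin


section \<open>Theories and prime theories\<close>

definition thy :: "fm set \<Rightarrow> bool" where
  "thy D \<longleftrightarrow> Box \<subseteq> D \<and> (\<forall>A B. A \<in> D \<longrightarrow> Imp A B \<in> D \<longrightarrow> B \<in> D)"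

definition ptheory :: "fm set \<Rightarrow> bool" where
  "ptheory D \<longleftrightarrow> thy D \<and> Bot \<notin> D \<and> (\<forall>A B. Disj A B \<in> D \<longrightarrow> A \<in> D \<or> B \<in> D)"

inductive_set Cn :: "fm set \<Rightarrow> fm set" for S where
  hyp: "A \<in> S \<Longrightarrow> A \<in> Cn S"
| ax: "A \<in> Box \<Longrightarrow> A \<in> Cn S"
| mp: "A \<in> Cn S \<Longrightarrow> Imp A B \<in> Cn S \<Longrightarrow> B \<in> Cn S"

lemma IPC_Box: "IPC \<subseteq> Box"
  unfolding Box_def by (auto intro: ext.ipc)

lemma Box_sub_wPL: "subst s wPL_ax \<in> Box"
proof -
  have "wPL_ax \<in> wPL" unfolding wPL_def by (rule ext.new) simp
  then have "subst s wPL_ax \<in> wPL" unfolding wPL_def by (rule ext.sub)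
  then have "subst s wPL_ax \<in> ext wPL {bw2}" by (rule ext.base)
  then show ?thesis unfolding Box_def by (rule ext.base)
qed

lemma Box_sub_bw2: "subst s bw2 \<in> Box"
proof -
  have "bw2 \<in> ext wPL {bw2}" by (rule ext.new) simp
  then have "subst s bw2 \<in> ext wPL {bw2}" by (rule ext.sub)
  then show ?thesis unfolding Box_def by (rule ext.base)
qed

lemma Box_sub_wem: "subst s wem \<in> Box"
proof -
  have "wem \<in> Box" unfolding Box_def by (rule ext.new) simp
  then show ?thesis unfolding Box_def by (rule ext.sub)
qed

lemma th_IPC: "thy D \<Longrightarrow> A \<in> IPC \<Longrightarrow> A \<in> D"
  using IPC_Box unfolding thy_def by blast

lemma th_mp: "thy D \<Longrightarrow> A \<in> D \<Longrightarrow> Imp A B \<in> D \<Longrightarrow> B \<in> D"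
  unfolding thy_def by blast

lemma th_Box: "thy D \<Longrightarrow> A \<in> Box \<Longrightarrow> A \<in> D"
  unfolding thy_def by blast

lemma IPC_id: "Imp A A \<in> IPC"
proof -
  have 1: "Imp (Imp A (Imp (Imp A A) A)) (Imp (Imp A (Imp A A)) (Imp A A)) \<in> IPC" by (rule IPC.ax2)
  have 2: "Imp A (Imp (Imp A A) A) \<in> IPC" by (rule IPC.ax1)
  have 3: "Imp (Imp A (Imp A A)) (Imp A A) \<in> IPC" using IPC.mp[OF 2 1] .
  have 4: "Imp A (Imp A A) \<in> IPC" by (rule IPC.ax1)
  show ?thesis using IPC.mp[OF 4 3] .
qed

lemma th_K: "thy D \<Longrightarrow> B \<in> D \<Longrightarrow> Imp A B \<in> D"
  using th_mp th_IPC IPC.ax1 by blast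

lemma th_S: "thy D \<Longrightarrow> Imp A B \<in> D \<Longrightarrow> Imp A (Imp B C) \<in> D \<Longrightarrow> Imp A C \<in> D"
  using th_mp[of D] th_IPC[of D] IPC.ax2 by metis

lemma Cn_theory: "thy (Cn S)"
  unfolding thy_def by (auto intro: Cn.intros)

lemma Cn_mono: "S \<subseteq> Cn S" by (auto intro: Cn.hyp)

lemma deduction:
  assumes D: "thy D" and A: "A \<in> Cn (insert B D)"
  shows "Imp B A \<in> D"
  using A
proof (induction rule: Cn.induct)
  case (hyp A)
  then show ?case
  proof
    assume "A = B" then show ?thesis using th_IPC[OF D IPC_id] by simp
  next
    assume "A \<in> D" then show ?thesis using th_K[OF D] by simp
  qed
next
  case (ax A)
  then show ?case using th_K[OF D] th_Box[OF D] by blast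
next
  case (mp A C)
  then show ?case using th_S[OF D] by blast
qed

lemma Cn_least: "thy D \<Longrightarrow> S \<subseteq> D \<Longrightarrow> Cn S \<subseteq> D"
proof
  fix x assume D: "thy D" and S: "S \<subseteq> D" and x: "x \<in> Cn S"
  from x show "x \<in> D" by induction (use D S in \<open>auto intro: th_mp th_Box\<close>)
qed

section \<open>Maximal theories via Zorn\<close>

lemma max_theory:
  assumes G: "thy G" and B: "B \<notin> G"
  shows "\<exists>D. thy D \<and> G \<subseteq> D \<and> B \<notin> D \<and>
     (\<forall>D'. thy D' \<longrightarrow> D \<subseteq> D' \<longrightarrow> B \<notin> D' \<longrightarrow> D' = D)"
proof -
  let ?A = "{D. thy D \<and> G \<subseteq> D \<and> B \<notin> D}"
  have "\<forall>C\<in>chains ?A. \<exists>U\<in>?A. \<forall>X\<in>C. X \<subseteq> U"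
  proof
    fix C assume C: "C \<in> chains ?A"
    show "\<exists>U\<in>?A. \<forall>X\<in>C. X \<subseteq> U"
    proof (cases "C = {}")
      case True then show ?thesis using G B by auto
    next
      case False
      have sub: "C \<subseteq> ?A" and ch: "\<forall>X\<in>C. \<forall>Y\<in>C. X \<subseteq> Y \<or> Y \<subseteq> X"
        using C unfolding chains_def chain_subset_def by auto
      have "thy (\<Union>C)"
        unfolding thy_def
      proof (intro conjI allI impI)
        show "Box \<subseteq> \<Union>C" using False sub unfolding thy_def by blast
      next
        fix A' B' assume "A' \<in> \<Union>C" "Imp A' B' \<in> \<Union>C"
        then obtain X Y where X: "X \<in> C" "A' \<in> X" and Y: "Y \<in> C" "Imp A' B' \<in> Y" by blast
        from ch X Y have "X \<subseteq> Y \<or> Y \<subseteq> X" by blast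
        then show "B' \<in> \<Union>C"
        proof
          assume "X \<subseteq> Y" then show ?thesis using X Y sub th_mp[of Y A' B'] by blast
        next
          assume "Y \<subseteq> X" then show ?thesis using X Y sub th_mp[of X A' B'] by blast
        qed
      qed
      moreover have "G \<subseteq> \<Union>C" using False sub by blast
      moreover have "B \<notin> \<Union>C" using sub by blast
      ultimately show ?thesis by blast
    qed
  qed
  from Zorn_Lemma2[OF this] obtain M where "M \<in> ?A" and "\<forall>X\<in>?A. M \<subseteq> X \<longrightarrow> X = M" by blast
  then show ?thesis by blast
qed

definition maxw :: "fm set \<Rightarrow> fm \<Rightarrow> bool" where
  "maxw D B \<longleftrightarrow> thy D \<and> B \<notin> D \<and> (\<forall>D'. thy D' \<longrightarrow> D \<subseteq> D' \<longrightarrow> B \<notin> D' \<longrightarrow> D' = D)"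

lemma maxw_ptheory:
  assumes M: "maxw D B" shows "ptheory D"
proof -
  have D: "thy D" and B: "B \<notin> D" and mx: "\<And>D'. thy D' \<Longrightarrow> D \<subseteq> D' \<Longrightarrow> B \<notin> D' \<Longrightarrow> D' = D"
    using M unfolding maxw_def by auto
  have bot: "Bot \<notin> D"
  proof
    assume "Bot \<in> D"
    then show False using th_mp[OF D _ th_IPC[OF D IPC.ax9]] B by blast
  qed
  have key: "Imp C B \<in> D" if "C \<notin> D" for C
  proof (rule ccontr)
    assume nI: "Imp C B \<notin> D"
    have "B \<notin> Cn (insert C D)" using deduction[OF D] nI by blast
    moreover have "D \<subseteq> Cn (insert C D)" using Cn_mono by blast
    ultimately have "Cn (insert C D) = D" using mx Cn_theory by blast
    then have "C \<in> D" using Cn_mono by blast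
    then show False using that by blast
  qed
  have "A \<in> D \<or> A' \<in> D" if "Disj A A' \<in> D" for A A'
  proof (rule ccontr)
    assume "\<not> (A \<in> D \<or> A' \<in> D)"
    then have "Imp A B \<in> D" "Imp A' B \<in> D" using key by auto
    then have "B \<in> D" using that th_mp[OF D] th_IPC[OF D IPC.ax8[of A B A']] by metis
    then show False using B by blast
  qed
  then show ?thesis unfolding ptheory_def using D bot by blast
qed

lemma ex_maxw: "thy G \<Longrightarrow> B \<notin> G \<Longrightarrow> \<exists>D. maxw D B \<and> G \<subseteq> D"
  using max_theory unfolding maxw_def by blast

lemma ptheory_theory: "ptheory D \<Longrightarrow> thy D" unfolding ptheory_def by blast

lemma witness:
  assumes D: "thy D" and nI: "Imp A B \<notin> D"
  shows "\<exists>D'. maxw D' B \<and> D \<subseteq> D' \<and> A \<in> D'"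
proof -
  have "B \<notin> Cn (insert A D)" using deduction[OF D] nI by blast
  from ex_maxw[OF Cn_theory this] obtain D' where "maxw D' B" "Cn (insert A D) \<subseteq> D'" by blast
  then show ?thesis using Cn_mono by blast
qed

lemma pt_imp:
  assumes D: "ptheory D"
  shows "Imp A B \<in> D \<longleftrightarrow> (\<forall>D'. ptheory D' \<longrightarrow> D \<subseteq> D' \<longrightarrow> A \<in> D' \<longrightarrow> B \<in> D')"
proof
  assume "Imp A B \<in> D"
  then show "\<forall>D'. ptheory D' \<longrightarrow> D \<subseteq> D' \<longrightarrow> A \<in> D' \<longrightarrow> B \<in> D'"
    using th_mp ptheory_theory by blast
next
  assume R: "\<forall>D'. ptheory D' \<longrightarrow> D \<subseteq> D' \<longrightarrow> A \<in> D' \<longrightarrow> B \<in> D'"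
  show "Imp A B \<in> D"
  proof (rule ccontr)
    assume "Imp A B \<notin> D"
    from witness[OF ptheory_theory[OF D] this] obtain D' where "maxw D' B" "D \<subseteq> D'" "A \<in> D'" by blast
    then show False using R maxw_ptheory unfolding maxw_def by blast
  qed
qed

lemma pt_conj: "ptheory D \<Longrightarrow> Conj A B \<in> D \<longleftrightarrow> A \<in> D \<and> B \<in> D"
  using th_mp[of D] th_IPC[of D] IPC.ax3 IPC.ax4 IPC.ax5 ptheory_theory by metis

lemma pt_disj: "ptheory D \<Longrightarrow> Disj A B \<in> D \<longleftrightarrow> A \<in> D \<or> B \<in> D"
  using th_mp[of D] th_IPC[of D] IPC.ax6 IPC.ax7 ptheory_theory unfolding ptheory_def by metis

lemma pt_bot: "ptheory D \<Longrightarrow> Bot \<notin> D" unfolding ptheory_def by blast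




lemma subst_wPL: "subst s wPL_ax = Disj (Imp (s 1) (s 0)) (Imp (Imp (Imp (s 0) (s 1)) (s 0)) (s 0))"
  unfolding wPL_ax_def Let_def by simp

lemma subst_bw2: "subst s bw2 = Disj (Imp (s 0) (Disj (s 1) (s 2)))
          (Disj (Imp (s 1) (Disj (s 0) (s 2))) (Imp (s 2) (Disj (s 0) (s 1))))"
  unfolding bw2_def by simp

lemma subst_wem: "subst s wem = Disj (Imp (s 0) Bot) (Imp (Imp (s 0) Bot) Bot)"
  unfolding wem_def Neg_def by simp

locale kmodel =
  fixes Wd :: "'w set" and le :: "'w \<Rightarrow> 'w \<Rightarrow> bool" and T :: "'w \<Rightarrow> fm \<Rightarrow> bool"
  assumes conj: "\<And>w A B. w\<in>Wd \<Longrightarrow> T w (Conj A B) = (T w A \<and> T w B)"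
   and disj: "\<And>w A B. w\<in>Wd \<Longrightarrow> T w (Disj A B) = (T w A \<or> T w B)"
   and imp: "\<And>w A B. w\<in>Wd \<Longrightarrow> T w (Imp A B) = (\<forall>u\<in>Wd. le w u \<longrightarrow> T u A \<longrightarrow> T u B)"
   and refl: "\<And>w. w\<in>Wd \<Longrightarrow> le w w"
   and trans: "\<And>w u v. w\<in>Wd \<Longrightarrow> u\<in>Wd \<Longrightarrow> v\<in>Wd \<Longrightarrow> le w u \<Longrightarrow> le u v \<Longrightarrow> le w v"
   and pers: "\<And>w u A. w\<in>Wd \<Longrightarrow> u\<in>Wd \<Longrightarrow> le w u \<Longrightarrow> T w A \<Longrightarrow> T u A"
   and mx: "\<And>w P. w\<in>Wd \<Longrightarrow> \<not> T w P \<Longrightarrow> (\<exists>v\<in>Wd. le w v \<and> \<not> T v P \<and> (\<forall>u\<in>Wd. le v u \<longrightarrow> \<not> T u P \<longrightarrow> u = v))"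
begin

lemma rot_step:
  assumes x0: "x0 \<in> Wd" and inst: "T x0 (Disj (Imp r (Conj p q)) (Imp (Imp (Imp (Conj p q) r) (Conj p q)) (Conj p q)))"
    and b: "b \<in> Wd" "le x0 b" "T b r" "\<not> T b q"
    and c: "c \<in> Wd" "le x0 c" "T c q" "\<not> T c p"
  shows "\<exists>V\<in>Wd. le x0 V \<and> T V q \<and> \<not> T V p \<and> T V (Imp p r)"
proof -
  let ?P = "Conj p q"
  have "\<not> T x0 (Imp r ?P)"
  proof
    assume "T x0 (Imp r ?P)"
    then have "T b ?P" using b(1,2,3) unfolding imp[OF x0] by blast
    then show False using b(4) conj[OF b(1)] by simp
  qed
  then have peirce: "T x0 (Imp (Imp (Imp ?P r) ?P) ?P)" using inst unfolding disj[OF x0] by blast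
  have "\<not> T c ?P" using conj[OF c(1)] c(4) by simp
  from mx[OF c(1) this] obtain V where V: "V \<in> Wd" "le c V" "\<not> T V ?P"
    and Vmax: "\<forall>u\<in>Wd. le V u \<longrightarrow> \<not> T u ?P \<longrightarrow> u = V" by blast
  have x0V: "le x0 V" using trans[OF x0 c(1) V(1) c(2) V(2)] .
  have qV: "T V q" using pers[OF c(1) V(1) V(2) c(3)] .
  have pV: "\<not> T V p" using qV V(3) conj[OF V(1)] by simp
  have pV': "T V (Imp (Imp (Imp ?P r) ?P) ?P)" using pers[OF x0 V(1) x0V peirce] .
  have "\<not> T V (Imp (Imp ?P r) ?P)"
  proof
    assume "T V (Imp (Imp ?P r) ?P)"
    then have "T V ?P" using pV' refl[OF V(1)] V(1) unfolding imp[OF V(1), of "Imp (Imp ?P r) ?P"] by blast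
    then show False using V(3) by simp
  qed
  then obtain u where u: "u \<in> Wd" "le V u" "T u (Imp ?P r)" "\<not> T u ?P" unfolding imp[OF V(1)] by blast
  then have "u = V" using Vmax by blast
  then have PrV: "T V (Imp ?P r)" using u by simp
  have "T V (Imp p r)"
    unfolding imp[OF V(1)]
  proof (intro ballI impI)
    fix w assume w: "w \<in> Wd" "le V w" "T w p"
    have "T w q" using pers[OF V(1) w(1) w(2) qV] .
    then have "T w ?P" using w conj[OF w(1)] by simp
    moreover have "T w (Imp ?P r)" using pers[OF V(1) w(1) w(2) PrV] .
    ultimately show "T w r" using refl[OF w(1)] w(1) unfolding imp[OF w(1)] by blast
  qed
  then show ?thesis using V(1) x0V qV pV by blast
qed

lemma cyc_abstract:
  assumes x0: "x0 \<in> Wd"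
    and instW: "\<And>s. T x0 (subst s wPL_ax)" and instB: "\<And>s. T x0 (subst s bw2)"
    and a: "a \<in> Wd" "le x0 a" "T a p" "\<not> T a r"
    and b: "b \<in> Wd" "le x0 b" "T b r" "\<not> T b q"
    and c: "c \<in> Wd" "le x0 c" "T c q" "\<not> T c p"
  shows False
proof -
  have iw: "T x0 (Disj (Imp Q P) (Imp (Imp (Imp P Q) P) P))" for P Q
    using instW[of "\<lambda>n. if n = 0 then P else Q"] unfolding subst_wPL by simp
  obtain VC where VC: "VC \<in> Wd" "le x0 VC" "T VC q" "\<not> T VC p" "T VC (Imp p r)"
    using rot_step[OF x0 iw b c] by blast
  obtain VA where VA: "VA \<in> Wd" "le x0 VA" "T VA p" "\<not> T VA r" "T VA (Imp r q)"
    using rot_step[OF x0 iw c a] by blast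
  obtain VB where VB: "VB \<in> Wd" "le x0 VB" "T VB r" "\<not> T VB q" "T VB (Imp q p)"
    using rot_step[OF x0 iw a b] by blast
  let ?FA = "Conj p (Imp r q)" and ?FB = "Conj r (Imp q p)" and ?FC = "Conj q (Imp p r)"
  have ib: "T x0 (Disj (Imp ?FA (Disj ?FB ?FC)) (Disj (Imp ?FB (Disj ?FA ?FC)) (Imp ?FC (Disj ?FA ?FB))))"
    using instB[of "\<lambda>n. if n = 0 then ?FA else if n = 1 then ?FB else ?FC"] unfolding subst_bw2 by simp
  have FA: "T VA ?FA" "\<not> T VA ?FB" "\<not> T VA ?FC"
  proof -
    show "T VA ?FA" using VA conj[OF VA(1)] by simp
    show "\<not> T VA ?FB" using VA conj[OF VA(1)] by simp
    have "\<not> T VA (Imp p r)" using refl[OF VA(1)] VA(1,3,4) unfolding imp[OF VA(1)] by blast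
    then show "\<not> T VA ?FC" using conj[OF VA(1)] by simp
  qed
  have FB: "T VB ?FB" "\<not> T VB ?FA" "\<not> T VB ?FC"
  proof -
    show "T VB ?FB" using VB conj[OF VB(1)] by simp
    show "\<not> T VB ?FC" using VB conj[OF VB(1)] by simp
    have "\<not> T VB (Imp r q)" using refl[OF VB(1)] VB(1,3,4) unfolding imp[OF VB(1)] by blast
    then show "\<not> T VB ?FA" using conj[OF VB(1)] by simp
  qed
  have FC: "T VC ?FC" "\<not> T VC ?FA" "\<not> T VC ?FB"
  proof -
    show "T VC ?FC" using VC conj[OF VC(1)] by simp
    show "\<not> T VC ?FA" using VC conj[OF VC(1)] by simp
    have "\<not> T VC (Imp q p)" using refl[OF VC(1)] VC(1,3,4) unfolding imp[OF VC(1)] by blast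
    then show "\<not> T VC ?FB" using conj[OF VC(1)] by simp
  qed
  from ib[unfolded disj[OF x0]] consider
      "T x0 (Imp ?FA (Disj ?FB ?FC))" | "T x0 (Imp ?FB (Disj ?FA ?FC))" | "T x0 (Imp ?FC (Disj ?FA ?FB))"
    by blast
  then show False
  proof cases
    case 1
    then have "T VA (Imp ?FA (Disj ?FB ?FC))" using pers[OF x0 VA(1) VA(2)] by blast
    then have "T VA (Disj ?FB ?FC)" using refl[OF VA(1)] VA(1) FA(1) unfolding imp[OF VA(1)] by blast
    then show False using FA(2,3) unfolding disj[OF VA(1)] by blast
  next
    case 2
    then have "T VB (Imp ?FB (Disj ?FA ?FC))" using pers[OF x0 VB(1) VB(2)] by blast
    then have "T VB (Disj ?FA ?FC)" using refl[OF VB(1)] VB(1) FB(1) unfolding imp[OF VB(1)] by blast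
    then show False using FB(2,3) unfolding disj[OF VB(1)] by blast
  next
    case 3
    then have "T VC (Imp ?FC (Disj ?FA ?FB))" using pers[OF x0 VC(1) VC(2)] by blast
    then have "T VC (Disj ?FA ?FB)" using refl[OF VC(1)] VC(1) FC(1) unfolding imp[OF VC(1)] by blast
    then show False using FC(2,3) unfolding disj[OF VC(1)] by blast
  qed
qed

end




fun satg :: "'a set \<Rightarrow> ('a \<Rightarrow> 'a \<Rightarrow> bool) \<Rightarrow> (nat \<Rightarrow> 'a set) \<Rightarrow> 'a \<Rightarrow> fm \<Rightarrow> bool" where
  "satg W R V x (Var n) = (x \<in> V n)"
| "satg W R V x Bot = False"
| "satg W R V x (Conj A B) = (satg W R V x A \<and> satg W R V x B)"
| "satg W R V x (Disj A B) = (satg W R V x A \<or> satg W R V x B)"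
| "satg W R V x (Imp A B) = (\<forall>y\<in>W. R x y \<longrightarrow> satg W R V y A \<longrightarrow> satg W R V y B)"

lemma sat_satg: "sat W R V x A = satg W R V x A"
  by (induction A arbitrary: x) auto

definition po :: "'a set \<Rightarrow> ('a \<Rightarrow> 'a \<Rightarrow> bool) \<Rightarrow> bool" where
  "po W R \<longleftrightarrow> finite W \<and> (\<forall>x\<in>W. R x x)
     \<and> (\<forall>x\<in>W. \<forall>y\<in>W. \<forall>z\<in>W. R x y \<longrightarrow> R y z \<longrightarrow> R x z)
     \<and> (\<forall>x\<in>W. \<forall>y\<in>W. R x y \<longrightarrow> R y x \<longrightarrow> x = y)"

lemma satg_pers:
  assumes tr: "\<forall>x\<in>W. \<forall>y\<in>W. \<forall>z\<in>W. R x y \<longrightarrow> R y z \<longrightarrow> R x z"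
    and up: "\<And>n x y. x \<in> V n \<Longrightarrow> y \<in> W \<Longrightarrow> R x y \<Longrightarrow> y \<in> V n"
  shows "x \<in> W \<Longrightarrow> y \<in> W \<Longrightarrow> R x y \<Longrightarrow> satg W R V x A \<Longrightarrow> satg W R V y A"
proof (induction A arbitrary: x y)
  case (Imp A B)
  then show ?case using tr by (metis satg.simps(5))
qed (use up in auto)

definition chaing :: "'a set \<Rightarrow> ('a \<Rightarrow> 'a \<Rightarrow> bool) \<Rightarrow> 'a list \<Rightarrow> bool" where
  "chaing W R xs \<longleftrightarrow> set xs \<subseteq> W
     \<and> (\<forall>i. Suc i < length xs \<longrightarrow> R (xs ! i) (xs ! Suc i) \<and> xs ! i \<noteq> xs ! Suc i)"

definition depthg :: "'a set \<Rightarrow> ('a \<Rightarrow> 'a \<Rightarrow> bool) \<Rightarrow> 'a \<Rightarrow> nat" where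
  "depthg W R x = Max {length xs | xs. xs \<noteq> [] \<and> hd xs = x \<and> chaing W R xs}"

lemma depth_eq: "depth W R x = depthg W R x"
  unfolding depth_def depthg_def strict_chain_def chaing_def by simp

context
  fixes W :: "'a set" and R
  assumes P: "po W R"
begin

lemma finW: "finite W" using P unfolding po_def by blast
lemma reflW: "x \<in> W \<Longrightarrow> R x x" using P unfolding po_def by blast
lemma transW: "x \<in> W \<Longrightarrow> y \<in> W \<Longrightarrow> z \<in> W \<Longrightarrow> R x y \<Longrightarrow> R y z \<Longrightarrow> R x z"
  using P unfolding po_def by blast
lemma antiW: "x \<in> W \<Longrightarrow> y \<in> W \<Longrightarrow> R x y \<Longrightarrow> R y x \<Longrightarrow> x = y"
  using P unfolding po_def by blast

lemma chain_R: "chaing W R xs \<Longrightarrow> i < j \<Longrightarrow> j < length xs \<Longrightarrow> R (xs ! i) (xs ! j)"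
proof (induction j)
  case 0 then show ?case by simp
next
  case (Suc j)
  have sub: "set xs \<subseteq> W" and st: "R (xs ! j) (xs ! Suc j)"
    using Suc.prems unfolding chaing_def by auto
  have inW: "xs ! i \<in> W" "xs ! j \<in> W" "xs ! Suc j \<in> W" using sub Suc.prems by auto
  show ?case
  proof (cases "i = j")
    case True then show ?thesis using st by simp
  next
    case False
    then have "R (xs ! i) (xs ! j)" using Suc by simp
    then show ?thesis using transW[OF inW] st by blast
  qed
qed

lemma chain_distinct: "chaing W R xs \<Longrightarrow> distinct xs"
proof -
  assume c: "chaing W R xs"
  have sub: "set xs \<subseteq> W" using c unfolding chaing_def by blast
  show "distinct xs"
    unfolding distinct_conv_nth
  proof (intro allI impI)
    fix i j assume ij: "i < length xs" "j < length xs" "i \<noteq> j"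
    show "xs ! i \<noteq> xs ! j"
    proof
      assume eq: "xs ! i = xs ! j"
      have "\<exists>a b. a < b \<and> b < length xs \<and> xs ! a = xs ! b"
        using ij eq by (metis linorder_neqE_nat)
      then obtain a b where ab: "a < b" "b < length xs" "xs ! a = xs ! b" by blast
      have st: "R (xs ! a) (xs ! Suc a)" "xs ! a \<noteq> xs ! Suc a" using c ab(1,2) unfolding chaing_def by auto
      have r2: "R (xs ! Suc a) (xs ! b)"
      proof (cases "Suc a = b")
        case True
        then have "xs ! Suc a \<in> set xs" using ab(2) by simp
        then have "xs ! Suc a \<in> W" using sub by blast
        then show ?thesis using reflW True by simp
      next
        case False then show ?thesis using chain_R[OF c] ab by simp
      qed
      have r3: "R (xs ! Suc a) (xs ! a)" using r2 ab(3) by simp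
      have "xs ! a \<in> W" "xs ! Suc a \<in> W" using ab sub by auto
      then have "xs ! a = xs ! Suc a"
        using antiW st(1) r3 by blast
      then show False using st by blast
    qed
  qed
qed

lemma chain_len: "chaing W R xs \<Longrightarrow> length xs \<le> card W"
proof -
  assume c: "chaing W R xs"
  have "length xs = card (set xs)" using chain_distinct[OF c] by (simp add: distinct_card)
  also have "\<dots> \<le> card W" using c finW unfolding chaing_def by (simp add: card_mono)
  finally show ?thesis .
qed

lemma Lset_fin: "finite {length xs | xs. xs \<noteq> [] \<and> hd xs = x \<and> chaing W R xs}"
  by (rule finite_subset[of _ "{..card W}"]) (auto dest: chain_len)

lemma single_chain: "x \<in> W \<Longrightarrow> chaing W R [x]"
  unfolding chaing_def by simp

lemma dg_ge: "chaing W R xs \<Longrightarrow> xs \<noteq> [] \<Longrightarrow> length xs \<le> depthg W R (hd xs)"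
  unfolding depthg_def by (rule Max_ge[OF Lset_fin]) blast

lemma dg_ex: "x \<in> W \<Longrightarrow> \<exists>xs. xs \<noteq> [] \<and> hd xs = x \<and> chaing W R xs \<and> length xs = depthg W R x"
proof -
  assume x: "x \<in> W"
  have ne: "{length xs | xs. xs \<noteq> [] \<and> hd xs = x \<and> chaing W R xs} \<noteq> {}"
    using single_chain[OF x] by force
  from Max_in[OF Lset_fin ne] show ?thesis unfolding depthg_def by auto
qed

lemma dg_pos: "x \<in> W \<Longrightarrow> 1 \<le> depthg W R x"
  using dg_ge[OF single_chain] by fastforce

lemma dg_le_card: "x \<in> W \<Longrightarrow> depthg W R x \<le> card W"
  using dg_ex chain_len by metis

lemma chain_Cons: "chaing W R (x # y # zs) = (x \<in> W \<and> R x y \<and> x \<noteq> y \<and> chaing W R (y # zs))"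
proof
  assume A: "chaing W R (x # y # zs)"
  have s: "set (x # y # zs) \<subseteq> W" and st: "\<And>i. Suc i < length (x # y # zs) \<Longrightarrow>
     R ((x # y # zs) ! i) ((x # y # zs) ! Suc i) \<and> (x # y # zs) ! i \<noteq> (x # y # zs) ! Suc i"
    using A unfolding chaing_def by blast+
  have "R x y \<and> x \<noteq> y" using st[of 0] by simp
  moreover have "chaing W R (y # zs)" unfolding chaing_def
  proof (rule conjI)
    show "set (y # zs) \<subseteq> W" using s by simp
  next
    show "\<forall>i. Suc i < length (y # zs) \<longrightarrow> R ((y # zs) ! i) ((y # zs) ! Suc i) \<and> (y # zs) ! i \<noteq> (y # zs) ! Suc i"
    proof (intro allI impI)
    fix i assume "Suc i < length (y # zs)"
    then show "R ((y # zs) ! i) ((y # zs) ! Suc i) \<and> (y # zs) ! i \<noteq> (y # zs) ! Suc i"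
      using st[of "Suc i"] by simp
    qed
  qed
  ultimately show "x \<in> W \<and> R x y \<and> x \<noteq> y \<and> chaing W R (y # zs)" using s by simp
next
  assume B: "x \<in> W \<and> R x y \<and> x \<noteq> y \<and> chaing W R (y # zs)"
  have s: "set (y # zs) \<subseteq> W" and st: "\<And>i. Suc i < length (y # zs) \<Longrightarrow>
     R ((y # zs) ! i) ((y # zs) ! Suc i) \<and> (y # zs) ! i \<noteq> (y # zs) ! Suc i"
    using B unfolding chaing_def by blast+
  show "chaing W R (x # y # zs)" unfolding chaing_def
  proof (rule conjI)
    show "set (x # y # zs) \<subseteq> W" using s B by simp
  next
    show "\<forall>i. Suc i < length (x # y # zs) \<longrightarrow> R ((x # y # zs) ! i) ((x # y # zs) ! Suc i) \<and> (x # y # zs) ! i \<noteq> (x # y # zs) ! Suc i"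
    proof (intro allI impI)
    fix i assume i: "Suc i < length (x # y # zs)"
    show "R ((x # y # zs) ! i) ((x # y # zs) ! Suc i) \<and> (x # y # zs) ! i \<noteq> (x # y # zs) ! Suc i"
    proof (cases i)
      case 0 then show ?thesis using B by simp
    next
      case (Suc j) then show ?thesis using st[of j] i by simp
    qed
    qed
  qed
qed

lemma D1: "x \<in> W \<Longrightarrow> y \<in> W \<Longrightarrow> R x y \<Longrightarrow> x \<noteq> y \<Longrightarrow> depthg W R y < depthg W R x"
proof -
  assume x: "x \<in> W" and y: "y \<in> W" and r: "R x y" and ne: "x \<noteq> y"
  obtain ys where ys: "ys \<noteq> []" "hd ys = y" "chaing W R ys" "length ys = depthg W R y"
    using dg_ex[OF y] by blast
  then obtain ys' where ys': "ys = y # ys'" by (cases ys) auto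
  have "chaing W R (x # y # ys')"
    using ys(3) x r ne unfolding ys' chain_Cons by blast
  from dg_ge[OF this] show ?thesis using ys ys' by simp
qed

lemma D2: "x \<in> W \<Longrightarrow> 2 \<le> depthg W R x \<Longrightarrow> \<exists>y\<in>W. R x y \<and> x \<noteq> y \<and> depthg W R y = depthg W R x - 1"
proof -
  assume x: "x \<in> W" and d: "2 \<le> depthg W R x"
  obtain xs where xs: "xs \<noteq> []" "hd xs = x" "chaing W R xs" "length xs = depthg W R x"
    using dg_ex[OF x] by blast
  obtain y zs where xs': "xs = x # y # zs"
  proof (cases xs)
    case Nil then show ?thesis using xs by simp
  next
    case (Cons a l)
    then show ?thesis using xs d that by (cases l) auto
  qed
  have c: "chaing W R (y # zs)" and st: "R x y" "x \<noteq> y" using xs(3) unfolding xs' chain_Cons by blast+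
  have yW: "y \<in> W" using c unfolding chaing_def by simp
  have "length (y # zs) \<le> depthg W R y" using dg_ge[OF c] by simp
  moreover have "depthg W R y < depthg W R x" using D1[OF x yW st(1,2)] .
  ultimately show ?thesis using st yW xs(4) xs' by force
qed

lemma D3:
  assumes x: "x \<in> W" and x': "x' \<in> W"
    and s: "\<forall>y\<in>W. R x y \<and> x \<noteq> y \<longrightarrow> R x' y \<and> x' \<noteq> y"
  shows "depthg W R x \<le> depthg W R x'"
proof -
  obtain xs where xs: "xs \<noteq> []" "hd xs = x" "chaing W R xs" "length xs = depthg W R x"
    using dg_ex[OF x] by blast
  show ?thesis
  proof (cases "length xs = 1")
    case True then show ?thesis using dg_pos[OF x'] xs by simp
  next
    case False
    obtain y zs where xs': "xs = x # y # zs"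
    proof (cases xs)
      case Nil then show ?thesis using xs by simp
    next
      case (Cons a l)
      then show ?thesis using xs False that by (cases l) auto
    qed
    have c: "chaing W R (y # zs)" and st: "R x y" "x \<noteq> y" using xs(3) unfolding xs' chain_Cons by blast+
    have yW: "y \<in> W" using c unfolding chaing_def by simp
    have st': "R x' y" "x' \<noteq> y" using s st yW by auto
    have "chaing W R (x' # y # zs)" using c st' x' unfolding chain_Cons by blast
    from dg_ge[OF this] show ?thesis using xs xs' by simp
  qed
qed

lemma D4: "x \<in> W \<Longrightarrow> 1 \<le> j \<Longrightarrow> j \<le> depthg W R x \<Longrightarrow> \<exists>y\<in>W. R x y \<and> depthg W R y = j"
proof (induction "depthg W R x - j" arbitrary: x)
  case 0
  then show ?case using reflW by (intro bexI[of _ x]) auto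
next
  case (Suc k)
  then have "2 \<le> depthg W R x" by linarith
  from D2[OF Suc.prems(1) this] obtain y where y: "y \<in> W" "R x y" "depthg W R y = depthg W R x - 1" by blast
  have "k = depthg W R y - j" using Suc.hyps(2) y(3) by linarith
  from Suc.hyps(1)[OF this y(1) Suc.prems(2)] obtain z where "z \<in> W" "R y z" "depthg W R z = j"
    using Suc.hyps(2) y(3) by force
  then show ?case using transW[OF Suc.prems(1) y(1)] y by blast
qed

definition Pcyc :: bool where
  "Pcyc \<longleftrightarrow> (\<forall>a\<in>W. \<forall>b\<in>W. \<forall>c\<in>W. R a c \<or> R b a \<or> R c b)"

lemma W1:
  assumes C: Pcyc and x: "x \<in> W" and x': "x' \<in> W" and n1: "\<not> R x x'" and n2: "\<not> R x' x"
  shows "depthg W R x = depthg W R x'"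
proof -
  have s: "\<forall>y\<in>W. R a y \<and> a \<noteq> y \<longrightarrow> R a' y \<and> a' \<noteq> y"
    if a: "a \<in> W" "a' \<in> W" "\<not> R a a'" "\<not> R a' a" for a a'
  proof (intro ballI impI)
    fix y assume y: "y \<in> W" "R a y \<and> a \<noteq> y"
    have "R a a' \<or> R y a \<or> R a' y" using C a y unfolding Pcyc_def by blast
    moreover have "\<not> R y a" using antiW[of a y] a y by blast
    ultimately have "R a' y" using a by blast
    moreover have "a' \<noteq> y" using y a by blast
    ultimately show "R a' y \<and> a' \<noteq> y" by blast
  qed
  show ?thesis using D3[OF x x' s[OF x x' n1 n2]] D3[OF x' x s[OF x' x n2 n1]] by simp
qed

lemma W2:
  assumes C: Pcyc and x: "x \<in> W" and y: "y \<in> W" and d: "depthg W R y < depthg W R x"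
  shows "R x y"
proof (rule ccontr)
  assume n: "\<not> R x y"
  show False
  proof (cases "R y x")
    case True
    then have "depthg W R x < depthg W R y" using D1[OF y x] n reflW[OF x] by blast
    then show False using d by simp
  next
    case False
    then show False using W1[OF C x y n False] d by simp
  qed
qed

lemma W3:
  assumes C: Pcyc and abc: "a \<in> W" "b \<in> W" "c \<in> W"
    and d: "depthg W R a = depthg W R b" "depthg W R b = depthg W R c"
  shows "a = b \<or> a = c \<or> b = c"
proof (rule ccontr)
  assume "\<not> (a = b \<or> a = c \<or> b = c)"
  then have ne: "a \<noteq> b" "a \<noteq> c" "b \<noteq> c" by auto
  have "\<not> R a c" using D1[OF abc(1) abc(3)] ne d by force
  moreover have "\<not> R b a" using D1[OF abc(2) abc(1)] ne d by force
  moreover have "\<not> R c b" using D1[OF abc(3) abc(2)] ne d by force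
  ultimately show False using C abc unfolding Pcyc_def by blast
qed

end




primrec subf :: "fm \<Rightarrow> fm set" where
  "subf (Var n) = {Var n}"
| "subf Bot = {Bot}"
| "subf (Conj A B) = insert (Conj A B) (subf A \<union> subf B)"
| "subf (Disj A B) = insert (Disj A B) (subf A \<union> subf B)"
| "subf (Imp A B) = insert (Imp A B) (subf A \<union> subf B)"

lemma subf_fin: "finite (subf A)" by (induction A) auto
lemma subf_self: "A \<in> subf A" by (cases A) auto
lemma subf_trans: "B \<in> subf A \<Longrightarrow> subf B \<subseteq> subf A"
  by (induction A) auto

lemma subf_Imp: "Imp A B \<in> subf C \<Longrightarrow> A \<in> subf C \<and> B \<in> subf C"
  using subf_trans[of "Imp A B" C] subf_self[of A] subf_self[of B] by auto

lemma thy_Box: "thy Box"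
  unfolding thy_def Box_def by (auto intro: ext.mp)

lemma maxw_max: "maxw D B \<Longrightarrow> thy D' \<Longrightarrow> D \<subseteq> D' \<Longrightarrow> B \<notin> D' \<Longrightarrow> D' = D"
  unfolding maxw_def by blast

lemma maxw_notin: "maxw D B \<Longrightarrow> B \<notin> D"
  unfolding maxw_def by blast

context
  fixes phi :: fm
  assumes nb: "phi \<notin> Box"
begin

definition G0 :: "fm set" where "G0 = (SOME D. maxw D phi)"

lemma G0: "maxw G0 phi"
proof -
  have "\<exists>D. maxw D phi" using ex_maxw[OF thy_Box nb] by blast
  then show ?thesis unfolding G0_def by (rule someI_ex)
qed

lemma G0_pt: "ptheory G0" using maxw_ptheory[OF G0] .

definition MM :: "fm set" where "MM = (SOME D. maxw D Bot \<and> G0 \<subseteq> D)"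

lemma MM: "maxw MM Bot \<and> G0 \<subseteq> MM"
proof -
  have "\<exists>D. maxw D Bot \<and> G0 \<subseteq> D"
    using ex_maxw[OF ptheory_theory[OF G0_pt] pt_bot[OF G0_pt]] by blast
  then show ?thesis unfolding MM_def by (rule someI_ex)
qed

lemma MM_pt: "ptheory MM" using maxw_ptheory MM by blast

lemma maxBot_neg:
  assumes M: "maxw M Bot" and b: "beta \<notin> M"
  shows "Imp beta Bot \<in> M"
proof (rule ccontr)
  assume "Imp beta Bot \<notin> M"
  from witness[OF _ this] M obtain D' where "maxw D' Bot" "M \<subseteq> D'" "beta \<in> D'"
    unfolding maxw_def by blast
  then have "D' = M" using maxw_max[OF M] unfolding maxw_def by blast
  then show False using b \<open>beta \<in> D'\<close> by simp
qed

lemma below_MM: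
  assumes y: "ptheory y" "G0 \<subseteq> y"
  shows "y \<subseteq> MM"
proof -
  obtain M' where M': "maxw M' Bot" "y \<subseteq> M'"
    using ex_maxw[OF ptheory_theory[OF y(1)] pt_bot[OF y(1)]] by blast
  have "M' \<subseteq> MM"
  proof
    fix beta assume bM': "beta \<in> M'"
    show "beta \<in> MM"
    proof (rule ccontr)
      assume "beta \<notin> MM"
      then have nb1: "Imp beta Bot \<in> MM" using maxBot_neg MM by blast
      have "subst (\<lambda>n. beta) wem \<in> G0" using th_Box[OF ptheory_theory[OF G0_pt] Box_sub_wem] .
      then have "Disj (Imp beta Bot) (Imp (Imp beta Bot) Bot) \<in> G0" unfolding subst_wem by simp
      then have "Imp beta Bot \<in> G0 \<or> Imp (Imp beta Bot) Bot \<in> G0" using G0_pt unfolding ptheory_def by blast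
      then show False
      proof
        assume "Imp beta Bot \<in> G0"
        then have "Imp beta Bot \<in> M'" using y M' by blast
        then have "Bot \<in> M'" using th_mp bM' M'(1) unfolding maxw_def by blast
        then show False using M'(1) unfolding maxw_def by blast
      next
        assume "Imp (Imp beta Bot) Bot \<in> G0"
        then have "Imp (Imp beta Bot) Bot \<in> MM" using MM by blast
        then have "Bot \<in> MM" using th_mp nb1 MM unfolding maxw_def by blast
        then show False using MM unfolding maxw_def by blast
      qed
    qed
  qed
  then show ?thesis using M' by blast
qed

definition wit :: "fm set \<Rightarrow> fm \<times> fm \<Rightarrow> fm set" where
  "wit y AB = (if Imp (fst AB) (snd AB) \<in> y \<or> fst AB \<in> y then y
      else (SOME z. ptheory z \<and> y \<subseteq> z \<and> fst AB \<in> z \<and> snd AB \<notin> z))"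

lemma wit_props:
  assumes y: "ptheory y"
  shows "ptheory (wit y (A, B)) \<and> y \<subseteq> wit y (A, B) \<and> (Imp A B \<notin> y \<longrightarrow> A \<in> wit y (A, B) \<and> B \<notin> wit y (A, B))"
proof (cases "Imp A B \<in> y \<or> A \<in> y")
  case True
  then have e: "wit y (A, B) = y" unfolding wit_def by simp
  have "Imp A B \<notin> y \<longrightarrow> B \<notin> y" using th_K[OF ptheory_theory[OF y]] by blast
  then show ?thesis using e y True by auto
next
  case False
  have "\<exists>z. ptheory z \<and> y \<subseteq> z \<and> A \<in> z \<and> B \<notin> z"
    using witness[OF ptheory_theory[OF y]] False maxw_ptheory maxw_notin by blast
  then have "ptheory (wit y (A, B)) \<and> y \<subseteq> wit y (A, B) \<and> A \<in> wit y (A, B) \<and> B \<notin> wit y (A, B)"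
    unfolding wit_def using False by simp (rule someI_ex)
  then show ?thesis by blast
qed

lemma wit_same: "wit y (A, B) \<noteq> y \<Longrightarrow> Imp A B \<notin> y \<and> A \<notin> y"
  unfolding wit_def by auto

definition SP :: "(fm \<times> fm) set" where "SP = {(A, B). Imp A B \<in> subf phi}"

lemma SP_fin: "finite SP"
proof -
  have "SP \<subseteq> subf phi \<times> subf phi"
    unfolding SP_def using subf_Imp by blast
  then show ?thesis using finite_subset subf_fin by blast
qed

definition X0 :: "fm set set" where "X0 = {foldl wit G0 ps | ps. set ps \<subseteq> SP}"

definition XX :: "fm set set" where "XX = insert MM X0"

lemma walk_props: "ptheory (foldl wit G0 ps) \<and> G0 \<subseteq> foldl wit G0 ps"
proof (induction ps rule: rev_induct)
  case Nil then show ?case using G0_pt by simp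
next
  case (snoc x xs)
  obtain A B where x: "x = (A, B)" by (cases x)
  show ?case using wit_props[of "foldl wit G0 xs" A B] snoc x by auto
qed

lemma walk_short:
  "set ps \<subseteq> SP \<Longrightarrow> \<exists>ps'. set ps' \<subseteq> SP \<and> length ps' \<le> card (subf phi \<inter> foldl wit G0 ps)
      \<and> foldl wit G0 ps' = foldl wit G0 ps"
proof (induction ps rule: rev_induct)
  case Nil then show ?case by (intro exI[of _ "[]"]) simp
next
  case (snoc x xs)
  obtain A B where x: "x = (A, B)" by (cases x)
  let ?y = "foldl wit G0 xs"
  from snoc obtain ps' where ps': "set ps' \<subseteq> SP" "length ps' \<le> card (subf phi \<inter> ?y)"
    "foldl wit G0 ps' = ?y" by auto
  have AB: "(A, B) \<in> SP" using snoc x by auto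
  show ?case
  proof (cases "wit ?y (A, B) = ?y")
    case True
    then show ?thesis using ps' x by (intro exI[of _ ps']) simp
  next
    case False
    then have n: "Imp A B \<notin> ?y" "A \<notin> ?y" using wit_same by blast+
    have wp: "?y \<subseteq> wit ?y (A, B)" "A \<in> wit ?y (A, B)"
      using wit_props[of ?y A B] walk_props n by blast+
    have As: "A \<in> subf phi" using AB subf_Imp unfolding SP_def by blast
    have "subf phi \<inter> ?y \<subset> subf phi \<inter> wit ?y (A, B)" using wp n As by blast
    then have "card (subf phi \<inter> ?y) < card (subf phi \<inter> wit ?y (A, B))"
      by (intro psubset_card_mono) (simp add: subf_fin)
    then show ?thesis using ps' x AB
      by (intro exI[of _ "ps' @ [(A, B)]"]) auto
  qed
qed

lemma X0_fin: "finite X0"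
proof -
  have "X0 \<subseteq> (\<lambda>ps. foldl wit G0 ps) ` {ps. set ps \<subseteq> SP \<and> length ps \<le> card (subf phi)}"
  proof
    fix z assume "z \<in> X0"
    then obtain ps where ps: "set ps \<subseteq> SP" "z = foldl wit G0 ps" unfolding X0_def by blast
    from walk_short[OF ps(1)] obtain ps' where ps': "set ps' \<subseteq> SP"
      "length ps' \<le> card (subf phi \<inter> foldl wit G0 ps)" "foldl wit G0 ps' = foldl wit G0 ps" by blast
    have "card (subf phi \<inter> foldl wit G0 ps) \<le> card (subf phi)"
      by (intro card_mono) (auto simp: subf_fin)
    then have "ps' \<in> {ps. set ps \<subseteq> SP \<and> length ps \<le> card (subf phi)}" using ps' by simp
    moreover have "z = foldl wit G0 ps'" using ps'(3) ps(2) by simp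
    ultimately show "z \<in> (\<lambda>ps. foldl wit G0 ps) ` {ps. set ps \<subseteq> SP \<and> length ps \<le> card (subf phi)}"
      by (rule rev_image_eqI)
  qed
  moreover have "finite {ps. set ps \<subseteq> SP \<and> length ps \<le> card (subf phi)}"
    using finite_lists_length_le[OF SP_fin] by simp
  ultimately show ?thesis by (rule finite_subset[OF _ finite_imageI])
qed

lemma XX_fin: "finite XX" unfolding XX_def using X0_fin by simp

lemma XX_props: "z \<in> XX \<Longrightarrow> ptheory z \<and> G0 \<subseteq> z \<and> z \<subseteq> MM"
proof -
  assume z: "z \<in> XX"
  have "ptheory z \<and> G0 \<subseteq> z"
    using z walk_props MM MM_pt unfolding XX_def X0_def by auto
  then show ?thesis using below_MM by blast
qed

lemma G0_XX: "G0 \<in> XX"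
  unfolding XX_def X0_def by (auto intro!: exI[of _ "[]"])

lemma MM_XX: "MM \<in> XX" unfolding XX_def by simp

lemma XX_wit:
  assumes z: "z \<in> XX" and s: "Imp A B \<in> subf phi" and n: "Imp A B \<notin> z"
  shows "\<exists>z'\<in>XX. z \<subseteq> z' \<and> A \<in> z' \<and> B \<notin> z'"
proof (cases "z = MM")
  case True
  from witness[OF ptheory_theory[OF MM_pt]] n True obtain D' where D': "maxw D' B" "MM \<subseteq> D'" "A \<in> D'"
    by blast
  have "Bot \<notin> D'" using maxw_ptheory[OF D'(1)] pt_bot by blast
  then have "D' = MM" using maxw_max[of MM Bot D'] MM D' unfolding maxw_def by blast
  then show ?thesis using True D' maxw_notin MM_XX by blast
next
  case False
  then obtain ps where ps: "set ps \<subseteq> SP" "z = foldl wit G0 ps" using z unfolding XX_def X0_def by blast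
  let ?z' = "foldl wit G0 (ps @ [(A, B)])"
  have "?z' \<in> X0" unfolding X0_def
    by (intro CollectI exI[of _ "ps @ [(A, B)]"]) (use ps s in \<open>auto simp: SP_def\<close>)
  then have "?z' \<in> XX" unfolding XX_def by simp
  moreover have "?z' = wit z (A, B)" using ps by simp
  moreover have "z \<subseteq> wit z (A, B) \<and> A \<in> wit z (A, B) \<and> B \<notin> wit z (A, B)"
    using wit_props[of z A B] XX_props[OF z] n by blast
  ultimately show ?thesis by metis
qed

definition VX :: "nat \<Rightarrow> fm set set" where "VX n = {z \<in> XX. Var n \<in> z}"

lemma subf_CD: "Conj A B \<in> subf C \<Longrightarrow> A \<in> subf C \<and> B \<in> subf C"
    "Disj A B \<in> subf C \<Longrightarrow> A \<in> subf C \<and> B \<in> subf C"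
  using subf_trans[of "Conj A B" C] subf_trans[of "Disj A B" C] subf_self[of A] subf_self[of B] by auto

lemma truth_XX: "A \<in> subf phi \<Longrightarrow> z \<in> XX \<Longrightarrow> satg XX (\<subseteq>) VX z A \<longleftrightarrow> A \<in> z"
proof (induction A arbitrary: z)
  case (Var n) then show ?case unfolding VX_def by simp
next
  case Bot
  have "ptheory z" using XX_props[OF Bot(2)] by blast
  then show ?case using pt_bot by simp
next
  case (Conj A B)
  have s: "A \<in> subf phi" "B \<in> subf phi" using subf_CD(1)[OF Conj.prems(1)] by blast+
  have "ptheory z" using XX_props[OF Conj.prems(2)] by blast
  then show ?case using Conj.IH(1)[OF s(1) Conj.prems(2)] Conj.IH(2)[OF s(2) Conj.prems(2)] pt_conj by simp
next
  case (Disj A B)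
  have s: "A \<in> subf phi" "B \<in> subf phi" using subf_CD(2)[OF Disj.prems(1)] by blast+
  have "ptheory z" using XX_props[OF Disj.prems(2)] by blast
  then show ?case using Disj.IH(1)[OF s(1) Disj.prems(2)] Disj.IH(2)[OF s(2) Disj.prems(2)] pt_disj by simp
next
  case (Imp A B)
  have s: "A \<in> subf phi" "B \<in> subf phi" using subf_Imp[OF Imp.prems(1)] by blast+
  show ?case
  proof
    assume L: "satg XX (\<subseteq>) VX z (Imp A B)"
    show "Imp A B \<in> z"
    proof (rule ccontr)
      assume "Imp A B \<notin> z"
      from XX_wit[OF Imp.prems(2) Imp.prems(1) this] obtain z' where
        z': "z' \<in> XX" "z \<subseteq> z'" "A \<in> z'" "B \<notin> z'" by blast
      have "satg XX (\<subseteq>) VX z' A" using Imp.IH(1)[OF s(1) z'(1)] z'(3) by simp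
      then have "satg XX (\<subseteq>) VX z' B" using L z'(1,2) by simp
      then show False using Imp.IH(2)[OF s(2) z'(1)] z'(4) by simp
    qed
  next
    assume R: "Imp A B \<in> z"
    show "satg XX (\<subseteq>) VX z (Imp A B)"
      unfolding satg.simps
    proof (intro ballI impI)
      fix y assume y: "y \<in> XX" "z \<subseteq> y" "satg XX (\<subseteq>) VX y A"
      have "A \<in> y" using Imp.IH(1)[OF s(1) y(1)] y(3) by simp
      moreover have "Imp A B \<in> y" using R y(2) by blast
      moreover have "thy y" using XX_props[OF y(1)] ptheory_theory by blast
      ultimately have "B \<in> y" using th_mp by blast
      then show "satg XX (\<subseteq>) VX y B" using Imp.IH(2)[OF s(2) y(1)] by simp
    qed
  qed
qed

lemma po_XX: "po XX (\<subseteq>)"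
  unfolding po_def using XX_fin by auto

lemma kmodel_can: "kmodel {D. ptheory D \<and> G0 \<subseteq> D} (\<subseteq>) (\<lambda>D A. A \<in> D)"
proof (rule kmodel.intro)
  fix w A B assume w: "w \<in> {D. ptheory D \<and> G0 \<subseteq> D}"
  then have pw: "ptheory w" and gw: "G0 \<subseteq> w" by auto
  show "(Conj A B \<in> w) = (A \<in> w \<and> B \<in> w)" using pt_conj[OF pw] .
  show "(Disj A B \<in> w) = (A \<in> w \<or> B \<in> w)" using pt_disj[OF pw] .
  show "(Imp A B \<in> w) = (\<forall>u\<in>{D. ptheory D \<and> G0 \<subseteq> D}. w \<subseteq> u \<longrightarrow> A \<in> u \<longrightarrow> B \<in> u)"
  proof
    assume "Imp A B \<in> w"
    then show "\<forall>u\<in>{D. ptheory D \<and> G0 \<subseteq> D}. w \<subseteq> u \<longrightarrow> A \<in> u \<longrightarrow> B \<in> u"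
      using pt_imp[OF pw] by blast
  next
    assume H: "\<forall>u\<in>{D. ptheory D \<and> G0 \<subseteq> D}. w \<subseteq> u \<longrightarrow> A \<in> u \<longrightarrow> B \<in> u"
    have "\<forall>D'. ptheory D' \<longrightarrow> w \<subseteq> D' \<longrightarrow> A \<in> D' \<longrightarrow> B \<in> D'"
    proof (intro allI impI)
      fix D' assume D': "ptheory D'" "w \<subseteq> D'" "A \<in> D'"
      have "D' \<in> {D. ptheory D \<and> G0 \<subseteq> D}" using D' gw by blast
      then show "B \<in> D'" using H D' by blast
    qed
    then show "Imp A B \<in> w" using pt_imp[OF pw] by blast
  qed
next
  fix w :: "fm set" show "w \<subseteq> w" by (rule subset_refl)
next
  fix w u v :: "fm set" assume "w \<subseteq> u" "u \<subseteq> v" then show "w \<subseteq> v" by (rule subset_trans)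
next
  fix w u :: "fm set" and A assume "w \<subseteq> u" "A \<in> w" then show "A \<in> u" by (rule subsetD)
next
  fix w P assume w: "w \<in> {D. ptheory D \<and> G0 \<subseteq> D}" and P: "P \<notin> w"
  then have pw: "ptheory w" and gw: "G0 \<subseteq> w" by auto
  from ex_maxw[OF ptheory_theory[OF pw] P] obtain D where D: "maxw D P" "w \<subseteq> D" by blast
  have pD: "ptheory D" using maxw_ptheory[OF D(1)] .
  have mem: "D \<in> {D. ptheory D \<and> G0 \<subseteq> D}" using pD gw D(2) by blast
  have mx: "\<forall>u\<in>{D. ptheory D \<and> G0 \<subseteq> D}. D \<subseteq> u \<longrightarrow> P \<notin> u \<longrightarrow> u = D"
  proof (intro ballI impI)
    fix u assume u: "u \<in> {D. ptheory D \<and> G0 \<subseteq> D}" "D \<subseteq> u" "P \<notin> u"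
    have "thy u" using u(1) ptheory_theory by blast
    then show "u = D" using maxw_max[OF D(1)] u(2,3) by blast
  qed
  show "\<exists>v\<in>{D. ptheory D \<and> G0 \<subseteq> D}. w \<subseteq> v \<and> P \<notin> v \<and>
         (\<forall>u\<in>{D. ptheory D \<and> G0 \<subseteq> D}. v \<subseteq> u \<longrightarrow> P \<notin> u \<longrightarrow> u = v)"
    using mem D(2) maxw_notin[OF D(1)] mx by blast
qed

lemma Pcyc_XX: "Pcyc XX (\<subseteq>)"
  unfolding Pcyc_def[OF po_XX]
proof (intro ballI)
  fix a b c assume abc: "a \<in> XX" "b \<in> XX" "c \<in> XX"
  show "a \<subseteq> c \<or> b \<subseteq> a \<or> c \<subseteq> b"
  proof (rule ccontr)
    assume "\<not> (a \<subseteq> c \<or> b \<subseteq> a \<or> c \<subseteq> b)"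
    then obtain p r q where pqr: "p \<in> a" "p \<notin> c" "r \<in> b" "r \<notin> a" "q \<in> c" "q \<notin> b" by blast
    interpret K: kmodel "{D. ptheory D \<and> G0 \<subseteq> D}" "(\<subseteq>)" "\<lambda>D A. A \<in> D" by (rule kmodel_can)
    have W: "a \<in> {D. ptheory D \<and> G0 \<subseteq> D}" "b \<in> {D. ptheory D \<and> G0 \<subseteq> D}" "c \<in> {D. ptheory D \<and> G0 \<subseteq> D}"
      "G0 \<in> {D. ptheory D \<and> G0 \<subseteq> D}"
      using XX_props abc G0_pt by auto
    have iW: "\<And>s. subst s wPL_ax \<in> G0" using th_Box[OF ptheory_theory[OF G0_pt] Box_sub_wPL] .
    have iB: "\<And>s. subst s bw2 \<in> G0" using th_Box[OF ptheory_theory[OF G0_pt] Box_sub_bw2] .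
    have g: "G0 \<subseteq> a" "G0 \<subseteq> b" "G0 \<subseteq> c" using XX_props abc by blast+
    show False
      using K.cyc_abstract[OF W(4) iW iB W(1) g(1) pqr(1) pqr(4) W(2) g(2) pqr(3) pqr(6) W(3) g(3) pqr(5) pqr(2)] .
  qed
qed

end




lemma two_of_card: "card S > 1 \<Longrightarrow> \<exists>a b. a \<in> S \<and> b \<in> S \<and> a \<noteq> b"
proof -
  assume c: "card S > 1"
  then have f: "finite S" by (intro card_ge_0_finite) simp
  have "\<not> card S \<le> Suc 0" using c by simp
  then show ?thesis using card_le_Suc0_iff_eq[OF f] by blast
qed

lemma sat_pers:
  assumes tr: "\<forall>x\<in>W. \<forall>y\<in>W. \<forall>z\<in>W. R x y \<longrightarrow> R y z \<longrightarrow> R x z"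
    and up: "\<forall>n. upset W R (V n)"
  shows "x \<in> W \<Longrightarrow> y \<in> W \<Longrightarrow> R x y \<Longrightarrow> sat W R V x A \<Longrightarrow> sat W R V y A"
  unfolding sat_satg
  by (rule satg_pers[OF tr]) (use up in \<open>auto simp: upset_def\<close>)

lemma frame_po: "finite_rooted_frame W R \<Longrightarrow> po W R"
  unfolding finite_rooted_frame_def po_def by blast

lemma G_kmodel:
  assumes F: "finite_rooted_frame W R" and up: "\<forall>n. upset W R (V n)"
  shows "kmodel W R (\<lambda>y A. sat W R V y A)"
proof (rule kmodel.intro)
  have P: "po W R" using frame_po[OF F] .
  fix w A B assume w: "w \<in> W"
  show "sat W R V w (Conj A B) = (sat W R V w A \<and> sat W R V w B)" by simp
  show "sat W R V w (Disj A B) = (sat W R V w A \<or> sat W R V w B)" by simp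
  show "sat W R V w (Imp A B) = (\<forall>u\<in>W. R w u \<longrightarrow> sat W R V u A \<longrightarrow> sat W R V u B)" by simp
next
  fix w assume "w \<in> W" then show "R w w" using F unfolding finite_rooted_frame_def by blast
next
  fix w u v assume "w \<in> W" "u \<in> W" "v \<in> W" "R w u" "R u v" then show "R w v"
    using F unfolding finite_rooted_frame_def by blast
next
  fix w u A assume "w \<in> W" "u \<in> W" "R w u" "sat W R V w A" then show "sat W R V u A"
    using sat_pers[OF _ up] F unfolding finite_rooted_frame_def by blast
next
  fix w P assume w: "w \<in> W" and nP: "\<not> sat W R V w P"
  have P: "po W R" using frame_po[OF F] .
  let ?S = "\<lambda>v. v \<in> W \<and> R w v \<and> \<not> sat W R V v P"
  have Sw: "?S w" using w nP reflW[OF P w] by blast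
  from ex_has_least_nat[of ?S w "depthg W R", OF Sw] obtain v where v: "?S v"
    and vmin: "\<forall>y. ?S y \<longrightarrow> depthg W R v \<le> depthg W R y" by blast
  have "\<forall>u\<in>W. R v u \<longrightarrow> \<not> sat W R V u P \<longrightarrow> u = v"
  proof (intro ballI impI)
    fix u assume u: "u \<in> W" "R v u" "\<not> sat W R V u P"
    have "R w u" using transW[OF P w _ u(1)] v u by blast
    then have "depthg W R v \<le> depthg W R u" using vmin u by blast
    then show "u = v" using D1[OF P _ u(1) u(2)] v by force
  qed
  then show "\<exists>v\<in>W. R w v \<and> \<not> sat W R V v P \<and> (\<forall>u\<in>W. R v u \<longrightarrow> \<not> sat W R V u P \<longrightarrow> u = v)"
    using v by blast
qed

lemma G_Pcyc:
  assumes fr: "frame_of L W R" and BL: "Box \<subseteq> L"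
  shows "Pcyc W R"
proof -
  have F: "finite_rooted_frame W R" and val: "\<And>A. A \<in> L \<Longrightarrow> valid_in W R A"
    using fr unfolding frame_of_def by auto
  have P: "po W R" using frame_po[OF F] .
  obtain rt where rt: "rt \<in> W" "\<forall>x\<in>W. R rt x" using F unfolding finite_rooted_frame_def by blast
  show ?thesis unfolding Pcyc_def[OF P]
  proof (intro ballI)
    fix a b c assume abc: "a \<in> W" "b \<in> W" "c \<in> W"
    show "R a c \<or> R b a \<or> R c b"
    proof (rule ccontr)
      assume n: "\<not> (R a c \<or> R b a \<or> R c b)"
      define V where "V n = (if n = 0 then {y\<in>W. \<not> R y c} else if n = 1 then {y\<in>W. \<not> R y b}
           else if n = 2 then {y\<in>W. \<not> R y a} else {})" for n :: nat
      have up: "\<forall>n. upset W R (V n)"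
      proof
        fix n
        show "upset W R (V n)" unfolding upset_def
        proof (intro conjI ballI impI)
          show "V n \<subseteq> W" unfolding V_def by auto
          fix x y assume x: "x \<in> V n" "y \<in> W" "R x y"
          have xW: "x \<in> W" using x(1) unfolding V_def by (auto split: if_splits)
          have key: "\<not> R y t" if "\<not> R x t" "t \<in> W" for t
            using transW[OF P xW x(2) that(2) x(3)] that(1) by blast
          show "y \<in> V n" using x(1,2) key abc unfolding V_def by (auto split: if_splits)
        qed
      qed
      interpret K: kmodel W R "\<lambda>y A. sat W R V y A" by (rule G_kmodel[OF F up])
      have iW: "\<And>s. sat W R V rt (subst s wPL_ax)"
        using val[OF subsetD[OF BL Box_sub_wPL]] up rt(1) unfolding valid_in_def by blast
      have iB: "\<And>s. sat W R V rt (subst s bw2)"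
        using val[OF subsetD[OF BL Box_sub_bw2]] up rt(1) unfolding valid_in_def by blast
      have fa: "sat W R V a (Var 0)" "\<not> sat W R V a (Var 2)" using n abc reflW[OF P] unfolding V_def by auto
      have fb: "sat W R V b (Var 2)" "\<not> sat W R V b (Var 1)" using n abc reflW[OF P] unfolding V_def by auto
      have fc: "sat W R V c (Var 1)" "\<not> sat W R V c (Var 0)" using n abc reflW[OF P] unfolding V_def by auto
      show False
        using K.cyc_abstract[OF rt(1) iW iB abc(1) _ fa abc(2) _ fb abc(3) _ fc] rt(2) abc by blast
    qed
  qed
qed


lemma X_top:
  assumes nb: "phi \<notin> Box"
  shows "depthg (XX phi) (\<subseteq>) (MM phi) = 1"
    and "z \<in> XX phi \<Longrightarrow> depthg (XX phi) (\<subseteq>) z = 1 \<Longrightarrow> z = MM phi"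
proof -
  have P: "po (XX phi) (\<subseteq>)" using po_XX[OF nb] .
  have MX: "MM phi \<in> XX phi" using MM_XX[OF nb] .
  show d1: "depthg (XX phi) (\<subseteq>) (MM phi) = 1"
  proof (rule ccontr)
    assume "depthg (XX phi) (\<subseteq>) (MM phi) \<noteq> 1"
    then have "2 \<le> depthg (XX phi) (\<subseteq>) (MM phi)" using dg_pos[OF P MX] by linarith
    from D2[OF P MX this] obtain y where y: "y \<in> XX phi" "MM phi \<subseteq> y" "MM phi \<noteq> y" by blast
    have "y \<subseteq> MM phi" using XX_props[OF nb y(1)] by blast
    then show False using y by blast
  qed
  assume z: "z \<in> XX phi" and dz: "depthg (XX phi) (\<subseteq>) z = 1"
  show "z = MM phi"
  proof (rule ccontr)
    assume ne: "z \<noteq> MM phi"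
    have "z \<subseteq> MM phi" using XX_props[OF nb z] by blast
    from D1[OF P z MX this ne] show False using d1 dz by simp
  qed
qed

lemma X_levels:
  assumes nb: "phi \<notin> Box" and j: "1 \<le> j" "j \<le> depthg (XX phi) (\<subseteq>) (G0 phi)"
  shows "\<exists>u v. {z \<in> XX phi. depthg (XX phi) (\<subseteq>) z = j} = {u, v}"
proof -
  have P: "po (XX phi) (\<subseteq>)" using po_XX[OF nb] .
  have C: "Pcyc (XX phi) (\<subseteq>)" using Pcyc_XX[OF nb] .
  let ?S = "{z \<in> XX phi. depthg (XX phi) (\<subseteq>) z = j}"
  obtain u where u: "u \<in> XX phi" "depthg (XX phi) (\<subseteq>) u = j"
    using D4[OF P G0_XX[OF nb] j] by blast
  show ?thesis
  proof (cases "\<forall>w\<in>?S. w = u")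
    case True
    have "?S = {u, u}"
    proof
      show "?S \<subseteq> {u, u}" using True by blast
      show "{u, u} \<subseteq> ?S" using u by blast
    qed
    then show ?thesis by (intro exI[of _ u])
  next
    case False
    then obtain v where v: "v \<in> XX phi" "depthg (XX phi) (\<subseteq>) v = j" "v \<noteq> u" by blast
    have "?S = {u, v}"
    proof
      show "?S \<subseteq> {u, v}"
      proof
        fix w assume w: "w \<in> ?S"
        have wX: "w \<in> XX phi" "depthg (XX phi) (\<subseteq>) w = j" using w by auto
        have "u = v \<or> u = w \<or> v = w"
          by (rule W3[OF P C u(1) v(1) wX(1)]) (simp_all add: u(2) v(2) wX(2))
        then show "w \<in> {u, v}" using v by blast
      qed
      show "{u, v} \<subseteq> ?S" using u v by auto
    qed
    then show ?thesis by (intro exI[of _ u] exI[of _ v])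
  qed
qed


lemma no_big_stack:
  assumes nb: "phi \<notin> Box" and phiL: "phi \<in> L" and BL: "Box \<subseteq> L" and fr: "frame_of L W R"
    and ks: "\<forall>i<k. card {x\<in>W. depth W R x = d + i} > 1" and kn: "card (XX phi) < k"
  shows False
proof -
  let ?X = "XX phi" and ?M = "MM phi" and ?G = "G0 phi"
  let ?dX = "depthg ?X (\<subseteq>)" and ?dG = "depthg W R"
  have PX: "po ?X (\<subseteq>)" using po_XX[OF nb] .
  have CX: "Pcyc ?X (\<subseteq>)" using Pcyc_XX[OF nb] .
  have F: "finite_rooted_frame W R" and val: "\<And>A. A \<in> L \<Longrightarrow> valid_in W R A"
    using fr unfolding frame_of_def by auto
  have PG: "po W R" using frame_po[OF F] .
  have CG: "Pcyc W R" using G_Pcyc[OF fr BL] .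
  have GX: "?G \<in> ?X" using G0_XX[OF nb] .
  have MX: "?M \<in> ?X" using MM_XX[OF nb] .
  have Xp: "\<And>z. z \<in> ?X \<Longrightarrow> ptheory z \<and> ?G \<subseteq> z \<and> z \<subseteq> ?M" using XX_props[OF nb] by blast
  have dM: "?dX ?M = 1" using X_top(1)[OF nb] .
  have dM': "\<And>z. z \<in> ?X \<Longrightarrow> ?dX z = 1 \<Longrightarrow> z = ?M" using X_top(2)[OF nb] by blast
  define m where "m = ?dX ?G"
  have m1: "1 \<le> m" unfolding m_def using dg_pos[OF PX GX] .
  have mk: "m < k" unfolding m_def using dg_le_card[OF PX GX] kn by linarith
  have two: "\<exists>a b. a \<in> W \<and> b \<in> W \<and> a \<noteq> b \<and> ?dG a = d + i \<and> ?dG b = d + i" if "i < k" for i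
  proof -
    have "card {x\<in>W. depth W R x = d + i} > 1" using ks that by blast
    from two_of_card[OF this] show ?thesis unfolding depth_eq by blast
  qed
  have mk1: "m - 1 < k" using mk by linarith
  obtain e where e0: "e \<in> W" "?dG e = d + (m - 1)"
    using two[OF mk1] by blast
  have e: "e \<in> W" "?dG e = d + m - 1" using e0 m1 by simp_all
  define g1 where "g1 t = (SOME g. g \<in> W \<and> ?dG g = t)" for t
  define uv where "uv j = (SOME p. {z \<in> ?X. ?dX z = j} = {fst p, snd p})" for j
  define f where "f y = (if y = e then ?G else if ?dG y \<le> d then ?M
      else if y = g1 (?dG y) then fst (uv (?dG y - d + 1)) else snd (uv (?dG y - d + 1)))" for y
  define lev where "lev y = (if y = e then m else if ?dG y \<le> d then 1 else ?dG y - d + 1)" for y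
  have uvS: "{z \<in> ?X. ?dX z = j} = {fst (uv j), snd (uv j)}" if jj: "1 \<le> j" "j \<le> m" for j
  proof -
    obtain u v where "{z \<in> ?X. ?dX z = j} = {u, v}" using X_levels[OF nb jj(1)] jj(2) m_def by blast
    then have "\<exists>p. {z \<in> ?X. ?dX z = j} = {fst p, snd p}" by (intro exI[of _ "(u, v)"]) simp
    then show ?thesis unfolding uv_def by (rule someI_ex)
  qed
  have mid: "g1 t \<in> W \<and> ?dG (g1 t) = t \<and> (\<exists>g2. g2 \<in> W \<and> ?dG g2 = t \<and> g2 \<noteq> g1 t)"
    if tt: "d \<le> t" "t < d + k" for t
  proof -
    have tk: "t - d < k" using tt by linarith
    obtain a b where ab0: "a \<in> W" "b \<in> W" "a \<noteq> b" "?dG a = d + (t - d)" "?dG b = d + (t - d)"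
      using two[OF tk] by blast
    have ab: "a \<in> W" "b \<in> W" "a \<noteq> b" "?dG a = t" "?dG b = t" using ab0 tt by simp_all
    then have "\<exists>g. g \<in> W \<and> ?dG g = t" by blast
    then have g: "g1 t \<in> W \<and> ?dG (g1 t) = t" unfolding g1_def by (rule someI_ex)
    show ?thesis
    proof (cases "a = g1 t")
      case True
      have "b \<noteq> g1 t" using True ab(3) by simp
      then have "\<exists>g2. g2 \<in> W \<and> ?dG g2 = t \<and> g2 \<noteq> g1 t" using ab(2,5) by (intro exI[of _ b]) simp
      then show ?thesis using g by (intro conjI) simp_all
    next
      case False
      then have "\<exists>g2. g2 \<in> W \<and> ?dG g2 = t \<and> g2 \<noteq> g1 t" using ab(1,4) by (intro exI[of _ a]) simp
      then show ?thesis using g by (intro conjI) simp_all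
    qed
  qed
  have cone: "?dG y < d + m - 1" if "y \<in> W" "R e y" "y \<noteq> e" for y
    using D1[OF PG e(1) that(1) that(2)] that(3) e(2) by simp
  have coneR: "R e y" if "y \<in> W" "?dG y < d + m - 1" for y
    using W2[OF PG CG e(1) that(1)] that(2) e(2) by simp
  have fp: "f y \<in> ?X \<and> ?dX (f y) = lev y \<and> lev y \<le> m" if y: "y \<in> W" "R e y" for y
  proof (cases "y = e")
    case True then show ?thesis unfolding f_def lev_def m_def using GX by simp
  next
    case ne: False
    show ?thesis
    proof (cases "?dG y \<le> d")
      case True then show ?thesis unfolding f_def lev_def using ne MX dM m1 by simp
    next
      case False
      let ?j = "?dG y - d + 1"
      have c: "?dG y < d + m - 1" using cone[OF y ne] .
      have j: "2 \<le> ?j" "?j \<le> m" using False c by linarith+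
      have S: "{z \<in> ?X. ?dX z = ?j} = {fst (uv ?j), snd (uv ?j)}" using uvS[of ?j] j by simp
      have "f y \<in> {fst (uv ?j), snd (uv ?j)}" unfolding f_def using ne False by simp
      then have "f y \<in> ?X \<and> ?dX (f y) = ?j" using S by blast
      then show ?thesis unfolding lev_def using ne False j by simp
    qed
  qed
  have dGlev: "?dG y = d + lev y - 1" if "y \<in> W" "R e y" "2 \<le> lev y" for y
    using that e(2) unfolding lev_def by (auto split: if_splits)
  have forth: "f y \<subseteq> f y'" if y: "y \<in> W" "R e y" and y': "y' \<in> W" "R y y'" for y y'
  proof (cases "y = y'")
    case True then show ?thesis by simp
  next
    case ne: False
    have ey': "R e y'" using transW[OF PG e(1) y(1) y'(1) y(2) y'(2)] .
    have lt: "?dG y' < ?dG y" using D1[OF PG y(1) y'(1) y'(2) ne] .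
    have y'e: "y' \<noteq> e"
    proof
      assume "y' = e"
      then have "y = e" using antiW[OF PG y(1) e(1)] y(2) y'(2) by simp
      then show False using ne \<open>y' = e\<close> by simp
    qed
    have fy: "f y \<in> ?X" "?dX (f y) = lev y" using fp[OF y] by blast+
    have fy': "f y' \<in> ?X" "?dX (f y') = lev y'" using fp[OF y'(1) ey'] by blast+
    show ?thesis
    proof (cases "y = e")
      case True then show ?thesis unfolding f_def[of y] using Xp[OF fy'(1)] by simp
    next
      case yne: False
      show ?thesis
      proof (cases "?dG y \<le> d")
        case True
        then have "f y = ?M" "f y' = ?M" unfolding f_def using yne y'e lt by simp_all
        then show ?thesis by simp
      next
        case False
        show ?thesis
        proof (cases "?dG y' \<le> d")
          case True
          then have "f y' = ?M" unfolding f_def using y'e by simp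
          then show ?thesis using Xp[OF fy(1)] by simp
        next
          case False2: False
          have "lev y' < lev y" unfolding lev_def using yne y'e False False2 lt by simp
          then have "?dX (f y') < ?dX (f y)" using fy fy' by simp
          then show ?thesis using W2[OF PX CX fy(1) fy'(1)] by simp
        qed
      qed
    qed
  qed
  have bk: "\<exists>y'\<in>W. R y y' \<and> f y' = z" if y: "y \<in> W" "R e y" and z: "z \<in> ?X" "f y \<subseteq> z" for y z
  proof (cases "z = f y")
    case True then show ?thesis using y reflW[OF PG y(1)] by blast
  next
    case False
    have fy: "f y \<in> ?X" "?dX (f y) = lev y" "lev y \<le> m" using fp[OF y] by blast+
    have lt: "?dX z < lev y" using D1[OF PX fy(1) z(1) z(2)] False fy(2) by simp
    have z1: "1 \<le> ?dX z" using dg_pos[OF PX z(1)] .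
    have l2: "2 \<le> lev y" using lt z1 by linarith
    have m2: "2 \<le> m" using l2 fy(3) by linarith
    have dy: "?dG y = d + lev y - 1" using dGlev[OF y l2] .
    show ?thesis
    proof (cases "?dX z = 1")
      case True
      then have zM: "z = ?M" using dM'[OF z(1)] by simp
      obtain g where g: "g \<in> W" "?dG g = d" using mid[of d] mk by auto
      have gR: "R y g" using W2[OF PG CG y(1) g(1)] dy g(2) l2 by simp
      have "g \<noteq> e" using g(2) e(2) m2 by auto
      then have "f g = ?M" unfolding f_def using g(2) by simp
      then show ?thesis using g gR zM by blast
    next
      case False
      let ?j = "?dX z" let ?t = "d + ?dX z - 1"
      have j: "2 \<le> ?j" "?j < lev y" using False z1 lt by linarith+
      have t: "d < ?t" "?t < d + m - 1" "?t < d + k" "?t - d + 1 = ?j" using j fy(3) mk by linarith+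
      obtain g2 where g1: "g1 ?t \<in> W" "?dG (g1 ?t) = ?t" and g2: "g2 \<in> W" "?dG g2 = ?t" "g2 \<noteq> g1 ?t"
        using mid[of ?t] t by auto
      have S: "{w \<in> ?X. ?dX w = ?j} = {fst (uv ?j), snd (uv ?j)}" using uvS[of ?j] j fy(3) by simp
      have zS: "z = fst (uv ?j) \<or> z = snd (uv ?j)" using S z(1) by blast
      have ne1: "g1 ?t \<noteq> e" using g1(2) e(2) t by auto
      have ne2: "g2 \<noteq> e" using g2(2) e(2) t by auto
      have f1: "f (g1 ?t) = fst (uv ?j)" unfolding f_def using ne1 g1(2) t by simp
      have f2: "f g2 = snd (uv ?j)" unfolding f_def using ne2 g2 t by simp
      have R1: "R y (g1 ?t)" using W2[OF PG CG y(1) g1(1)] g1(2) dy j by simp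
      have R2: "R y g2" using W2[OF PG CG y(1) g2(1)] g2(2) dy j by simp
      show ?thesis using zS f1 f2 R1 R2 g1(1) g2(1) by metis
    qed
  qed
  define VG where "VG n = {y \<in> W. R e y \<and> f y \<in> VX phi n}" for n
  have upG: "\<forall>n. upset W R (VG n)"
  proof
    fix n show "upset W R (VG n)" unfolding upset_def
    proof (intro conjI ballI impI)
      show "VG n \<subseteq> W" unfolding VG_def by blast
      fix x y assume x: "x \<in> VG n" "y \<in> W" "R x y"
      have xW: "x \<in> W" "R e x" "f x \<in> VX phi n" using x(1) unfolding VG_def by blast+
      have ey: "R e y" using transW[OF PG e(1) xW(1) x(2) xW(2) x(3)] .
      have "f x \<subseteq> f y" using forth[OF xW(1,2) x(2,3)] .
      moreover have "f y \<in> ?X" using fp[OF x(2) ey] by blast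
      ultimately have "f y \<in> VX phi n" using xW(3) unfolding VX_def[OF nb] by blast
      then show "y \<in> VG n" unfolding VG_def using x(2) ey by blast
    qed
  qed
  have tr: "sat W R VG y A \<longleftrightarrow> satg ?X (\<subseteq>) (VX phi) (f y) A" if "y \<in> W" "R e y" for y A
    using that
  proof (induction A arbitrary: y)
    case (Var n) then show ?case unfolding VG_def by simp
  next
    case Bot then show ?case by simp
  next
    case (Conj A B) then show ?case by simp
  next
    case (Disj A B) then show ?case by simp
  next
    case (Imp A B)
    show ?case
    proof
      assume L: "sat W R VG y (Imp A B)"
      show "satg ?X (\<subseteq>) (VX phi) (f y) (Imp A B)"
        unfolding satg.simps
      proof (intro ballI impI)
        fix z assume z: "z \<in> ?X" "f y \<subseteq> z" "satg ?X (\<subseteq>) (VX phi) z A"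
        obtain y' where y': "y' \<in> W" "R y y'" "f y' = z" using bk[OF Imp.prems z(1,2)] by blast
        have ey': "R e y'" using transW[OF PG e(1) Imp.prems(1) y'(1) Imp.prems(2) y'(2)] .
        have "sat W R VG y' A" using Imp.IH(1)[OF y'(1) ey'] z(3) y'(3) by simp
        then have "sat W R VG y' B" using L y'(1,2) by simp
        then show "satg ?X (\<subseteq>) (VX phi) z B" using Imp.IH(2)[OF y'(1) ey'] y'(3) by simp
      qed
    next
      assume Rr: "satg ?X (\<subseteq>) (VX phi) (f y) (Imp A B)"
      show "sat W R VG y (Imp A B)"
        unfolding sat.simps
      proof (intro ballI impI)
        fix y' assume y': "y' \<in> W" "R y y'" "sat W R VG y' A"
        have ey': "R e y'" using transW[OF PG e(1) Imp.prems(1) y'(1) Imp.prems(2) y'(2)] .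
        have fy': "f y' \<in> ?X" using fp[OF y'(1) ey'] by blast
        have "f y \<subseteq> f y'" using forth[OF Imp.prems y'(1,2)] .
        moreover have "satg ?X (\<subseteq>) (VX phi) (f y') A" using Imp.IH(1)[OF y'(1) ey'] y'(3) by simp
        ultimately have "satg ?X (\<subseteq>) (VX phi) (f y') B" using Rr fy' by simp
        then show "sat W R VG y' B" using Imp.IH(2)[OF y'(1) ey'] by simp
      qed
    qed
  qed
  have "sat W R VG e phi" using val[OF phiL] upG e(1) unfolding valid_in_def by blast
  then have "satg ?X (\<subseteq>) (VX phi) (f e) phi" using tr[OF e(1) reflW[OF PG e(1)]] by simp
  then have "satg ?X (\<subseteq>) (VX phi) ?G phi" unfolding f_def by simp
  then have "phi \<in> ?G" using truth_XX[OF nb subf_self GX] by simp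
  then show False using G0[OF nb] maxw_notin by blast
qed


theorem mainTheorem15:
  fixes L' :: "fm set"
  assumes "si_logic L'"
    and "Box \<subset> L'"
    and "\<not> finite_depth L'"
  shows "\<exists>n. \<forall>W R. frame_of L' W R \<longrightarrow> stack_depth_le W R n"
proof -
  obtain phi where phiL: "phi \<in> L'" and nb: "phi \<notin> Box" using assms(2) by blast
  have BL: "Box \<subseteq> L'" using assms(2) by blast
  show ?thesis
  proof (intro exI[of _ "card (XX phi)"] allI impI)
    fix W R assume fr: "frame_of L' W R"
    show "stack_depth_le W R (card (XX phi))" unfolding stack_depth_le_def
    proof (intro allI impI)
      fix k assume "k_stack W R k"
      then obtain d where ks: "\<forall>i<k. card {x\<in>W. depth W R x = d + i} > 1" unfolding k_stack_def by blast
      show "k \<le> card (XX phi)"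
      proof (rule ccontr)
        assume "\<not> k \<le> card (XX phi)"
        then have "card (XX phi) < k" by simp
        from no_big_stack[OF nb phiL BL fr ks this] show False .
      qed
    qed
  qed
qed


end
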